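(* Let $p$ be an odd prime, $a,m\in\mathbb Z_p$ with $m\not\equiv0\pmod p$ and $a\not\equiv0,-1\pmod p$, and put $A_k=\binom ak\binom{-1-a}k\binom{2k}k$. Then $$\sum_{k=0}^{p-1}\frac{A_k}{m^k(2k-1)}\equiv\Big(\frac8m-2\Big)\sum_{k=0}^{p-1}\frac{kA_k}{m^k}-\sum_{k=0}^{p-1}\frac{A_k}{m^k}-\frac{8a(a+1)}m\sum_{k=0}^{p-2}\frac{A_k}{m^k(k+1)}\pmod{p^3}.$$
   Context: $\mathbb Z_p$ denotes the set of rational numbers whose denominator is not divisible by $p$; for $u,v\in\mathbb Z_p$, $u\equiv v\pmod{p^r}$ means $(u-v)/p^r\in\mathbb Z_p$. For $a$ rational, $\binom a0=1$ and $\binom ak=\frac{a(a-1)\cdots(a-k+1)}{k!}$ for $k\ge1$. *)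

theory Defs
  imports Complex_Main "HOL-Computational_Algebra.Primes"
begin

text \<open>Z_p: rationals whose (reduced) denominator is not divisible by p.\<close>
definition in_Zp :: "nat \<Rightarrow> rat \<Rightarrow> bool" where
  "in_Zp p x \<longleftrightarrow> \<not> (int p dvd snd (quotient_of x))"

definition cong_Zp :: "nat \<Rightarrow> nat \<Rightarrow> rat \<Rightarrow> rat \<Rightarrow> bool" where
  "cong_Zp p r u v \<longleftrightarrow> in_Zp p ((u - v) / (of_nat p) ^ r)"

end

theory Submission
  imports Defs
begin


lemma zp_iff:
  assumes p: "prime p"
  shows "in_Zp p x \<longleftrightarrow> (\<exists>u v::int. \<not> int p dvd v \<and> x = of_int u / of_int v)"
proof
  assume "in_Zp p x"
  then show "\<exists>u v::int. \<not> int p dvd v \<and> x = of_int u / of_int v"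
    unfolding in_Zp_def
    by (metis prod.collapse quotient_of_div)
next
  assume "\<exists>u v::int. \<not> int p dvd v \<and> x = of_int u / of_int v"
  then obtain u v :: int where nv: "\<not> int p dvd v" and x: "x = of_int u / of_int v" by blast
  have v0: "v \<noteq> 0" using nv by auto
  obtain u' v' where q: "quotient_of x = (u', v')" by (cases "quotient_of x")
  have v'0: "v' > 0" using quotient_of_denom_pos[OF q] .
  have cop: "coprime u' v'" using quotient_of_coprime[OF q] .
  have "x = of_int u' / of_int v'" using quotient_of_div[OF q] .
  with x v0 v'0 have "of_int u * of_int v' = (of_int u' * of_int v :: rat)"
    by (simp add: field_simps)
  then have e: "u * v' = u' * v" by (metis of_int_eq_iff of_int_mult)
  have "v' dvd u' * v" by (metis dvd_triv_right e)
  then have "v' dvd v" using cop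
    by (metis coprime_commute coprime_dvd_mult_right_iff mult.commute)
  then have "\<not> int p dvd v'" using nv dvd_trans by blast
  then show "in_Zp p x" unfolding in_Zp_def q by simp
qed

lemma zp_int: "prime p \<Longrightarrow> in_Zp p (of_int k)"
  by (subst zp_iff, assumption, rule exI[of _ k], rule exI[of _ 1]) (auto simp: prime_gt_1_nat)

lemma zp_nat: "prime p \<Longrightarrow> in_Zp p (of_nat k)"
  using zp_int[of p "int k"] by simp

lemma zp_mult:
  assumes p: "prime p" and "in_Zp p x" "in_Zp p y" shows "in_Zp p (x * y)"
proof -
  obtain u v where 1: "\<not> int p dvd v" "x = of_int u / of_int v" using assms zp_iff by blast
  obtain u' v' where 2: "\<not> int p dvd v'" "y = of_int u' / of_int v'" using assms zp_iff by blast
  have pp: "prime (int p)" using p by simp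
  have "\<not> int p dvd v * v'" using 1 2 pp by (simp add: prime_dvd_mult_iff)
  moreover have "x * y = of_int (u*u') / of_int (v*v')" using 1 2 by simp
  ultimately show ?thesis using zp_iff[OF p] by blast
qed

lemma zp_add:
  assumes p: "prime p" and "in_Zp p x" "in_Zp p y" shows "in_Zp p (x + y)"
proof -
  obtain u v where 1: "\<not> int p dvd v" "x = of_int u / of_int v" using assms zp_iff by blast
  obtain u' v' where 2: "\<not> int p dvd v'" "y = of_int u' / of_int v'" using assms zp_iff by blast
  have pp: "prime (int p)" using p by simp
  have "\<not> int p dvd v * v'" using 1 2 pp by (simp add: prime_dvd_mult_iff)
  moreover have "v \<noteq> 0" "v' \<noteq> 0" using 1 2 by auto
  then have "x + y = of_int (u*v' + u'*v) / of_int (v*v')" using 1 2 by (simp add: field_simps)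
  ultimately show ?thesis using zp_iff[OF p] by blast
qed

lemma zp_uminus:
  assumes p: "prime p" and "in_Zp p x" shows "in_Zp p (- x)"
  using zp_mult[OF p zp_int[OF p, of "-1"] assms(2)] by simp

lemma zp_diff:
  assumes p: "prime p" and "in_Zp p x" "in_Zp p y" shows "in_Zp p (x - y)"
  using zp_add[OF p assms(2) zp_uminus[OF p assms(3)]] by simp

lemma zp_div_int:
  assumes p: "prime p" and "in_Zp p x" "\<not> int p dvd d" shows "in_Zp p (x / of_int d)"
proof -
  have "in_Zp p (1 / of_int d)" using zp_iff[OF p] assms(3) by (metis of_int_1)
  from zp_mult[OF p assms(2) this] show ?thesis by simp
qed

lemma zp_inv:
  assumes p: "prime p" and "in_Zp p x" "\<not> in_Zp p (x / of_nat p)" shows "in_Zp p (1 / x)"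
proof -
  obtain u v where 1: "\<not> int p dvd v" "x = of_int u / of_int v" using assms zp_iff by blast
  have "\<not> int p dvd u"
  proof
    assume "int p dvd u"
    then obtain w where "u = int p * w" by blast
    then have "x / of_nat p = of_int w / of_int v" using 1 p by (simp add: prime_gt_0_nat)
    then show False using assms(3) 1 zp_iff[OF p] by blast
  qed
  moreover have "1 / x = of_int v / of_int u" using 1 by simp
  ultimately show ?thesis using zp_iff[OF p] by blast
qed

lemma zp_sum: "prime p \<Longrightarrow> (\<And>i. i \<in> S \<Longrightarrow> in_Zp p (f i)) \<Longrightarrow> in_Zp p (sum f S)"
proof (induction S rule: infinite_finite_induct)
  case (infinite A) then show ?case using zp_int[of p 0] by simp
next
  case empty then show ?case using zp_int[of p 0] by simp
next
  case (insert x F) then show ?case by (simp add: zp_add)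
qed

lemma zp_prod: "prime p \<Longrightarrow> (\<And>i. i \<in> S \<Longrightarrow> in_Zp p (f i)) \<Longrightarrow> in_Zp p (prod f S)"
proof (induction S rule: infinite_finite_induct)
  case (infinite A) then show ?case using zp_int[of p 1] by simp
next
  case empty then show ?case using zp_int[of p 1] by simp
next
  case (insert x F) then show ?case by (simp add: zp_mult)
qed

lemma zp_pow: "prime p \<Longrightarrow> in_Zp p x \<Longrightarrow> in_Zp p (x ^ k)"
  by (induction k) (auto simp: zp_mult zp_int[of p 1, simplified])



lemma zp_residue:
  assumes p: "prime p" and a: "in_Zp p a"
  shows "\<exists>r::nat. r < p \<and> in_Zp p ((a - of_nat r) / of_nat p)"
proof -
  obtain u v where 1: "\<not> int p dvd v" "a = of_int u / of_int v" using assms zp_iff by blast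
  have pp: "prime (int p)" using p by simp
  have "coprime (int p) v" using prime_imp_coprime[OF pp 1(1)] .
  then have g: "gcd v (int p) = 1" by (simp add: coprime_iff_gcd_eq_1 gcd.commute)
  obtain w t where b: "w * v + t * int p = 1" using bezout_int[of v "int p"] g by auto
  define q where "q = (u * w) div int p"
  define r where "r = (u * w) mod int p"
  have p0: "int p > 0" using p prime_gt_0_nat by simp
  have r0: "0 \<le> r" "r < int p" using p0 unfolding r_def by auto
  have rr: "r = u * w - int p * q" unfolding r_def q_def using div_mult_mod_eq[of "u*w" "int p"] by (simp add: algebra_simps)
  have "u - r * v = u * (1 - w * v) + int p * q * v"
    unfolding rr by (simp add: algebra_simps)
  also have "1 - w * v = t * int p" using b by simp
  finally have "u - r * v = int p * (u * t + q * v)" by (simp add: algebra_simps)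
  then obtain z where z: "u - r * v = int p * z" by blast
  have v0: "v \<noteq> 0" using 1 by auto
  have "(a - of_int r) / of_nat p = of_int z / of_int v"
  proof -
    have "a - of_int r = of_int (u - r * v) / of_int v" using 1 v0 by (simp add: field_simps)
    also have "\<dots> = of_nat p * of_int z / of_int v" using z by simp
    finally show ?thesis using p0 by simp
  qed
  then have "in_Zp p ((a - of_int r) / of_nat p)" using zp_iff[OF p] 1 by blast
  moreover have "nat r < p" using r0 by linarith
  moreover have "(of_nat (nat r)::rat) = of_int r" using r0 by simp
  ultimately show ?thesis by metis
qed
lemma nat_aux: "Suc (Suc (2*k)) * (y::nat) = Suc k * (2 * y)" by simp

lemma nat_aux2: "Suc k * x = 2 * (Suc (2*k) * y) \<Longrightarrow> of_nat (Suc k) * (of_nat x::rat) = 2 * (2 * of_nat k + 1) * of_nat y"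
proof -
  assume "Suc k * x = 2 * (Suc (2*k) * y)"
  then have "of_nat (Suc k * x) = (of_nat (2 * (Suc (2*k) * y)) :: rat)" by simp
  then show ?thesis by (simp add: algebra_simps)
qed

lemma binom_rec:
  "of_nat (Suc k) * of_nat ((2 * Suc k) choose Suc k) = (2 * (2 * of_nat k + 1)) * (of_nat ((2*k) choose k) :: rat)"
proof -
  have e1: "Suc k * (Suc (Suc (2*k)) choose Suc k) = Suc (Suc (2*k)) * (Suc (2*k) choose k)"
    using Suc_times_binomial[of k "Suc (2*k)"] by simp
  have e2: "(Suc (2*k) choose k) = (Suc (2*k) choose Suc k)"
    using binomial_symmetric[of k "Suc (2*k)"] by simp
  have e3: "Suc k * (Suc (2*k) choose Suc k) = Suc (2*k) * (2*k choose k)"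
    using Suc_times_binomial[of k "2*k"] by simp
  have e4: "Suc k * (Suc (2*k) choose k) = Suc (2*k) * (2*k choose k)" using e2 e3 by simp
  have "Suc k * (Suc k * (Suc (Suc (2*k)) choose Suc k)) = Suc k * (Suc (Suc (2*k)) * (Suc (2*k) choose k))"
    by (simp only: e1)
  also have "\<dots> = Suc (Suc (2*k)) * (Suc k * (Suc (2*k) choose k))" by (simp only: mult.left_commute)
  also have "\<dots> = Suc (Suc (2*k)) * (Suc (2*k) * (2*k choose k))" by (simp only: e4)
  also have "\<dots> = Suc k * (2 * (Suc (2*k) * (2*k choose k)))" by (rule nat_aux)
  finally have "Suc k * (Suc k * (Suc (Suc (2*k)) choose Suc k)) = Suc k * (2 * (Suc (2*k) * (2*k choose k)))" .
  moreover have "Suc k \<noteq> 0" by simp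
  ultimately have "Suc k * (Suc (Suc (2*k)) choose Suc k) = 2 * (Suc (2*k) * (2*k choose k))"
    using mult_left_cancel by blast
  then have X: "of_nat (Suc k) * (of_nat (Suc (Suc (2*k)) choose Suc k) :: rat) = 2 * (2 * of_nat k + 1) * of_nat (2*k choose k)"
    by (rule nat_aux2)
  have Y: "2 * Suc k = Suc (Suc (2*k))" by simp
  show ?thesis unfolding Y by (rule X)
qed


lemma gchoose_rec:
  "of_nat (Suc k) * ((a::rat) gchoose Suc k) = (a - of_nat k) * (a gchoose k)"
proof -
  have "fact (Suc k) * (a gchoose Suc k) = (\<Prod>i = 0..<Suc k. a - of_nat i)" by (rule gbinomial_mult_fact)
  also have "\<dots> = (a - of_nat k) * (\<Prod>i = 0..<k. a - of_nat i)" by simp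
  also have "(\<Prod>i = 0..<k. a - of_nat i) = fact k * (a gchoose k)" by (rule gbinomial_mult_fact[symmetric])
  finally have 1: "fact (Suc k) * (a gchoose Suc k) = (a - of_nat k) * (fact k * (a gchoose k))" .
  have "fact k * (of_nat (Suc k) * (a gchoose Suc k)) = fact (Suc k) * (a gchoose Suc k)"
    by (metis fact_Suc mult.assoc mult.commute)
  also note 1
  finally have "fact k * (of_nat (Suc k) * (a gchoose Suc k)) = fact k * ((a - of_nat k) * (a gchoose k))"
    by (simp only: mult.left_commute)
  then show ?thesis by simp
qed

lemma binom_p_dvd:
  assumes p: "prime p" and n: "p = Suc n"
  shows "p dvd ((2*n) choose n)"
proof -
  have "Suc n * (Suc (2*n) choose Suc n) = Suc (2*n) * (2*n choose n)"
    using Suc_times_binomial[of n "2*n"] by simp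
  then have "p dvd Suc (2*n) * (2*n choose n)" using n by (metis dvd_triv_left)
  moreover have "\<not> p dvd Suc (2*n)"
  proof
    assume a: "p dvd Suc (2*n)"
    have e: "Suc (2*n) = p + n" using n by simp
    have "p dvd p + n" using a e by metis
    then have "p dvd n" by (simp add: dvd_add_right_iff)
    moreover have "0 < n" using n prime_ge_2_nat[OF p] by simp
    ultimately have "p \<le> n" by (simp add: dvd_imp_le)
    then show False using n by simp
  qed
  ultimately show ?thesis using p prime_dvd_mult_iff[of p "Suc (2*n)" "2*n choose n"] by blast
qed


lemma alg1:
  fixes x a A m M :: rat
  assumes "2*x+1 \<noteq> 0" "x+1 \<noteq> 0" "m \<noteq> 0" "M \<noteq> 0"
  shows "-4*(x+1)^2/(2*(x+1)-1) * ((-2*(2*x+1)*(a-x)*(a+x+1)*A/(x+1)^3)/(M*m)) = 8*(a-x)*(a+x+1)*A/((x+1)*(M*m))"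
proof -
  have gen: "-4*y^2/z * ((-2*z*B)/(y^3*(M*m))) = 8*B/(y*(M*m))" if "y \<noteq> 0" "z \<noteq> 0" for y z B :: rat
    using that assms(3,4) by (simp add: field_simps power2_eq_square power3_eq_cube)
  have e: "2*(x+1)-1 = 2*x+1" by simp
  have e2: "-2*(2*x+1)*(a-x)*(a+x+1)*A = -2*(2*x+1)*((a-x)*(a+x+1)*A)" by (simp add: mult.assoc)
  have e3: "8*(a-x)*(a+x+1)*A = 8*((a-x)*(a+x+1)*A)" by (simp add: mult.assoc)
  show ?thesis unfolding e e2 e3 using gen[OF assms(2,1)] by (simp add: mult.assoc)
qed

lemma alg2:
  fixes x a A m M :: rat
  assumes "2*x-1 \<noteq> 0" "x+1 \<noteq> 0" "m \<noteq> 0" "M \<noteq> 0"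
  shows "A/(M*(2*x-1)) - ((8/m-2)*(x*A/M) - A/M - 8*a*(a+1)/m*(A/(M*(x+1))))
    = 8*(a-x)*(a+x+1)*A/((x+1)*(M*m)) - (-4*x^2/(2*x-1) * (A/M))"
proof -
  have i1: "inverse (2*x-1) * (2*x-1) = 1" using assms(1) by simp
  have i2: "inverse (x+1) * (x+1) = 1" using assms(2) by simp
  have i3: "inverse m * m = 1" using assms(3) by simp
  have i4: "inverse M * M = 1" using assms(4) by simp
  show ?thesis unfolding divide_inverse inverse_mult_distrib using i1 i2 i3 i4 by algebra
qed

lemma alg4:
  fixes F c Gs H d Q r T :: rat
  shows "F - (c*Gs - H - d*(Q + r)) = T \<Longrightarrow> F - (c*Gs - H - d*Q) = T - d*r"
  by (simp add: algebra_simps)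

lemma alg3:
  fixes x a A m M :: rat
  assumes "x+1 \<noteq> 0" "m \<noteq> 0" "M \<noteq> 0"
  shows "8*(a-x)*(a+x+1)*A/((x+1)*(M*m)) - 8*a*(a+1)/m*(A/(M*(x+1))) = -8*x*A/(M*m)"
proof -
  have i2: "inverse (x+1) * (x+1) = 1" using assms(1) by simp
  have i3: "inverse m * m = 1" using assms(2) by simp
  have i4: "inverse M * M = 1" using assms(3) by simp
  show ?thesis unfolding divide_inverse inverse_mult_distrib using i2 i3 i4 by algebra
qed

theorem theorem5p1:
  fixes p :: nat and a m :: rat
  assumes "prime p" and "odd p"
    and "in_Zp p a" and "in_Zp p m"
    and "\<not> cong_Zp p 1 m 0"
    and "\<not> cong_Zp p 1 a 0" and "\<not> cong_Zp p 1 a (-1)"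
  defines "A \<equiv> (\<lambda>k::nat. (a gchoose k) * ((-1 - a) gchoose k) * of_nat ((2*k) choose k))"
  shows "cong_Zp p 3
     (\<Sum>k=0..p-1. A k / (m ^ k * (2 * of_nat k - 1)))
     ((8 / m - 2) * (\<Sum>k=0..p-1. of_nat k * A k / m ^ k)
       - (\<Sum>k=0..p-1. A k / m ^ k)
       - 8 * a * (a + 1) / m * (\<Sum>k=0..p-2. A k / (m ^ k * (of_nat k + 1))))"
proof -
  note p = assms(1)
  have p2: "p \<ge> 2" using prime_ge_2_nat[OF p] .
  define n' where "n' = p - 2"
  have pn: "p = Suc (Suc n')" using p2 unfolding n'_def by simp
  define N where "N = Suc n'"
  have pN: "p = Suc N" using pn N_def by simp
  have m0: "m \<noteq> 0"
  proof
    assume "m = 0"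
    then have "cong_Zp p 1 m 0" unfolding cong_Zp_def using zp_int[OF p, of 0] by simp
    then show False using assms(5) by simp
  qed
  have recA: "of_nat (Suc k)^3 * A (Suc k) = -2*(2*of_nat k+1)*(a - of_nat k)*(a + of_nat k + 1) * A k" for k
  proof -
    have "of_nat (Suc k)^3 * A (Suc k) = (of_nat (Suc k) * (a gchoose Suc k)) * (of_nat (Suc k) * ((-1-a) gchoose Suc k))
       * (of_nat (Suc k) * of_nat ((2*Suc k) choose Suc k))"
      unfolding A_def power3_eq_cube by (simp only: mult_ac)
    also have "\<dots> = ((a - of_nat k) * (a gchoose k)) * ((-1 - a - of_nat k) * ((-1-a) gchoose k))
       * ((2 * (2 * of_nat k + 1)) * of_nat ((2*k) choose k))"
      by (simp only: gchoose_rec binom_rec)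
    also have "\<dots> = -2*(2*of_nat k+1)*(a - of_nat k)*(a + of_nat k + 1) * A k"
      unfolding A_def by (simp add: algebra_simps)
    finally show ?thesis .
  qed
  have AS: "A (Suc k) = -2*(2*of_nat k+1)*(a - of_nat k)*(a + of_nat k + 1) * A k / (of_nat k + 1)^3" for k
  proof -
    have ofS: "of_nat (Suc k) = (of_nat k + 1 :: rat)" by simp
    have h: "(of_nat k + 1)^3 * A (Suc k) = -2*(2*of_nat k+1)*(a - of_nat k)*(a + of_nat k + 1) * A k"
      using recA[of k] unfolding ofS .
    have nz: "(of_nat k + 1)^3 \<noteq> (0::rat)" by (metis of_nat_Suc of_nat_eq_0_iff nat.distinct(1) add.commute power_not_zero)
    show ?thesis using h nz by (metis nonzero_mult_div_cancel_left)
  qed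
  have d0: "2 * of_nat k - 1 \<noteq> (0::rat)" for k
  proof
    assume "2 * of_nat k - 1 = (0::rat)"
    then have "of_nat (2 * k) = (of_nat 1 :: rat)" by simp
    then have "2 * k = 1" using of_nat_eq_iff by blast
    then show False by presburger
  qed
  have d1: "2 * of_nat k + 1 \<noteq> (0::rat)" for k
  proof
    assume "2 * of_nat k + 1 = (0::rat)"
    then have "of_nat (2 * k + 1) = (0 :: rat)" by simp
    then show False by (simp only: of_nat_eq_0_iff)
  qed
  have d2: "of_nat k + 1 \<noteq> (0::rat)" for k
    by (metis of_nat_Suc of_nat_eq_0_iff nat.distinct(1) add.commute)
  define G where "G k = -4 * of_nat k^2/(2*of_nat k - 1) * (A k / m^k)" for k
  have step: "A k/(m^k*(2*of_nat k - 1)) - ((8/m - 2)*(of_nat k * A k/m^k) - A k/m^k - 8*a*(a+1)/m*(A k/(m^k*(of_nat k+1)))) = G (Suc k) - G k" for k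
  proof -
    have ofS: "of_nat (Suc k) = (of_nat k + 1 :: rat)" by simp
    have mS: "m^Suc k = m^k * m" by simp
    have mk: "m^k \<noteq> 0" using m0 by simp
    have "G (Suc k) = 8*(a - of_nat k)*(a + of_nat k + 1) * A k / ((of_nat k + 1) * (m^k * m))"
      unfolding G_def AS ofS mS by (rule alg1[OF d1 d2 m0 mk])
    then show ?thesis unfolding G_def using alg2[OF d0 d2 m0 mk] by simp
  qed
  have GS: "G (Suc k) = 8*(a - of_nat k)*(a + of_nat k + 1) * A k / ((of_nat k + 1) * (m^k * m))" for k
  proof -
    have ofS: "of_nat (Suc k) = (of_nat k + 1 :: rat)" by simp
    have mS: "m^Suc k = m^k * m" by simp
    have mk: "m^k \<noteq> 0" using m0 by simp
    show ?thesis unfolding G_def AS ofS mS by (rule alg1[OF d1 d2 m0 mk])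
  qed
  define f where "f k = A k/(m^k*(2*of_nat k - 1))" for k
  define g where "g k = of_nat k * A k/m^k" for k
  define h where "h k = A k / m^k" for k
  define q where "q k = A k/(m^k*(of_nat k + 1))" for k
  have "(\<Sum>k=0..N. f k - ((8/m-2)*g k - h k - 8*a*(a+1)/m * q k)) = (\<Sum>k=0..N. G (Suc k) - G k)"
    by (intro sum.cong refl) (unfold f_def g_def h_def q_def, rule step)
  also have "\<dots> = G (Suc N) - G 0" by (rule sum_Suc_diff) simp
  also have "G 0 = 0" by (simp add: G_def)
  finally have tel: "(\<Sum>k=0..N. f k - ((8/m-2)*g k - h k - 8*a*(a+1)/m * q k)) = G (Suc N)" by simp
  have "(\<Sum>k=0..N. f k - ((8/m-2)*g k - h k - 8*a*(a+1)/m * q k))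
     = sum f {0..N} - ((8/m-2) * sum g {0..N} - sum h {0..N} - 8*a*(a+1)/m * sum q {0..N})"
    by (simp add: sum_subtractf sum_distrib_left)
  also have "sum q {0..N} = sum q {0..n'} + q N" by (simp add: N_def)
  finally have E: "sum f {0..N} - ((8/m-2) * sum g {0..N} - sum h {0..N} - 8*a*(a+1)/m * sum q {0..n'})
      = G (Suc N) - 8*a*(a+1)/m * q N" using tel by (intro alg4) simp
  have mN: "m^N \<noteq> 0" using m0 by simp
  have E2: "G (Suc N) - 8*a*(a+1)/m * q N = -8 * of_nat N * A N / (m^N * m)"
    unfolding GS q_def by (rule alg3[OF d2 m0 mN])
  have p1: "p - 1 = N" "p - 2 = n'" using pN pn by auto
  define S1 where "S1 = (\<Sum>k=0..p-1. A k / (m ^ k * (2 * of_nat k - 1)))"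
  define R where "R = ((8 / m - 2) * (\<Sum>k=0..p-1. of_nat k * A k / m ^ k)
       - (\<Sum>k=0..p-1. A k / m ^ k)
       - 8 * a * (a + 1) / m * (\<Sum>k=0..p-2. A k / (m ^ k * (of_nat k + 1))))"
  have D: "S1 - R = -8 * of_nat N * A N / (m^N * m)"
    using E E2 unfolding S1_def R_def p1 f_def g_def h_def q_def by simp
  have p0: "of_nat p \<noteq> (0::rat)" using p2 by simp
  have key: "in_Zp p (A N / of_nat p ^ 3)"
  proof -
    obtain r where r: "r < p" "in_Zp p ((a - of_nat r)/of_nat p)" using zp_residue[OF p assms(3)] by blast
    have r0: "r \<noteq> 0"
    proof
      assume "r = 0"
      then have "cong_Zp p 1 a 0" using r(2) unfolding cong_Zp_def by simp
      then show False using assms(6) by simp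
    qed
    have rN: "r \<noteq> N"
    proof
      assume "r = N"
      then have "in_Zp p ((a - of_nat N)/of_nat p + 1)" using r(2) zp_add[OF p _ zp_int[OF p, of 1]] by simp
      moreover have "(a - of_nat N)/of_nat p + 1 = (a - -1) / of_nat p ^ 1"
        using p0 pN by (simp add: field_simps)
      ultimately have "cong_Zp p 1 a (-1)" unfolding cong_Zp_def by simp
      then show False using assms(7) by simp
    qed
    have rlt: "r < N" using r(1) rN pN by simp
    define s where "s = N - r"
    have slt: "s < N" using r0 rlt s_def by simp
    define X where "X = (a - of_nat r)/of_nat p"
    define P1 where "P1 = prod (\<lambda>i. a - of_nat i) ({0..<N} - {r})"
    define P2 where "P2 = prod (\<lambda>i. (-1-a) - of_nat i) ({0..<N} - {s})"
    define F where "F = (fact N :: rat)"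
    have F0: "F \<noteq> 0" unfolding F_def by simp
    have h1: "F * (a gchoose N) = (a - of_nat r) * P1"
      unfolding F_def P1_def gbinomial_mult_fact using rlt by (simp add: prod.remove)
    have h2: "F * ((-1-a) gchoose N) = ((-1-a) - of_nat s) * P2"
      unfolding F_def P2_def gbinomial_mult_fact using slt by (simp add: prod.remove)
    obtain c where c: "(2*N choose N) = p * c" using binom_p_dvd[OF p pN] by blast
    have aX: "a - of_nat r = of_nat p * X" unfolding X_def using p0 by simp
    have sX: "(-1-a) - of_nat s = of_nat p * (- X - 1)"
    proof -
      have "of_nat s = (of_nat N - of_nat r :: rat)" unfolding s_def using rlt by (simp add: of_nat_diff)
      moreover have "(of_nat p :: rat) = of_nat N + 1" using pN by simp
      ultimately show ?thesis using aX by (simp add: algebra_simps)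
    qed
    have AN: "A N = (a gchoose N) * ((-1-a) gchoose N) * (of_nat p * of_nat c)"
      unfolding A_def c by simp
    have "A N / of_nat p ^ 3 = (X * (- X - 1) * P1 * P2 * of_nat c) / F / F"
    proof -
      have iF: "inverse F * F = 1" using F0 by simp
      have ip: "inverse (of_nat p) * of_nat p = (1::rat)" using p0 by simp
      have g1: "(a gchoose N) = inverse F * (of_nat p * X * P1)"
        using h1 iF aX by (metis mult.assoc mult.left_commute mult_1)
      have g2: "((-1-a) gchoose N) = inverse F * (of_nat p * (- X - 1) * P2)"
        using h2 iF sX by (metis mult.assoc mult.left_commute mult_1)
      show ?thesis unfolding AN g1 g2 divide_inverse power3_eq_cube inverse_mult_distrib
        using ip iF by algebra
    qed
    moreover have "in_Zp p ((X * (- X - 1) * P1 * P2 * of_nat c) / F / F)"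
    proof -
      have X: "in_Zp p X" using r(2) X_def by simp
      have "in_Zp p (- X - 1)" using zp_diff[OF p zp_uminus[OF p X] zp_int[OF p, of 1]] by simp
      moreover have "in_Zp p P1" unfolding P1_def by (rule zp_prod[OF p]) (simp add: zp_diff[OF p assms(3) zp_nat[OF p]])
      moreover have "in_Zp p P2" unfolding P2_def
        by (rule zp_prod[OF p]) (intro zp_diff[OF p _ zp_nat[OF p]] zp_diff[OF p zp_int[OF p, of "-1", simplified] assms(3)])
      ultimately have "in_Zp p (X * (- X - 1) * P1 * P2 * of_nat c)"
        using X zp_nat[OF p, of c] by (simp add: zp_mult[OF p])
      moreover have "F = of_int (int (fact N))" unfolding F_def by simp
      moreover have "\<not> p dvd fact N" using prime_dvd_fact_iff[OF p, of N] pN by simp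
      then have "\<not> int p dvd int (fact N)" by (metis int_dvd_int_iff)
      ultimately show ?thesis using zp_div_int[OF p] by metis
    qed
    ultimately show ?thesis by simp
  qed
  have im: "in_Zp p (1/m)" using zp_inv[OF p assms(4)] assms(5) unfolding cong_Zp_def by simp
  have "(S1 - R) / of_nat p ^ 3 = (-8 * of_nat N) * (A N / of_nat p ^ 3) * (1/m)^(Suc N)"
  proof -
    have i3: "inverse m * m = 1" using m0 by simp
    have i4: "inverse (of_nat p) * of_nat p = (1::rat)" using p0 by simp
    have i5: "inverse (m^N) = inverse m ^ N" by (simp add: power_inverse)
    show ?thesis unfolding D divide_inverse inverse_mult_distrib power_Suc power_inverse
      using i5 by (simp add: ac_simps)
  qed
  moreover have "in_Zp p ((-8 * of_nat N) * (A N / of_nat p ^ 3) * (1/m)^(Suc N))"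
  proof -
    have z8: "in_Zp p (-8 * of_nat N)" using zp_int[OF p, of "-8 * int N"] by simp
    show ?thesis by (rule zp_mult[OF p zp_mult[OF p z8 key] zp_pow[OF p im]])
  qed
  ultimately show ?thesis unfolding cong_Zp_def S1_def[symmetric] R_def[symmetric] by simp
qed

end
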